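(* Consider the class-incremental setting described in the context, where the TII predictor is induced by OOD detectors $P_1,\dots,P_t$. Let $\delta,\eta\ge0$ and $\epsilon_1,\dots,\epsilon_t\ge0$. If $H_{\rm WTP}(\boldsymbol{x})\le\delta$, $H_{\rm TAP}(\boldsymbol{x})\le\eta$, and $H_{{\rm OOD},i}(\boldsymbol{x})\le\epsilon_i$ for all $i\in[t]$, for every input $\boldsymbol{x}$, then the loss error satisfies $$\mathcal L\in\Big[0,\ \max\Big\{\delta+\mathbb{E}_{\boldsymbol{x}\sim\mu}\Big[\Big(\sum_{i}\mathbf 1_{\boldsymbol{x}\in\mathcal X_i}e^{\epsilon_i}\Big)\Big(\sum_i\mathbf 1_{\boldsymbol{x}\notin\mathcal X_i}(1-e^{-\epsilon_i})\Big)\Big],\ \eta\Big\}\Big],$$ where $\boldsymbol{x}\in\mathcal X_i$ means $i=\bar i(\boldsymbol{x})$, so the integrand equals $e^{\epsilon_{\bar i(\boldsymbol{x})}}\sum_{j\ne\bar i(\boldsymbol{x})}(1-e^{-\epsilon_j})$.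
   Context: Class-incremental setting (CIL). Fix $t\ge1$ tasks; task $i$ has within-task class indices $[n_i]$; $C=\{(i,j):i\in[t],j\in[n_i]\}$ is the set of all classes (distinct across tasks). Let $\mu$ be a probability distribution on inputs; each $\boldsymbol{x}$ has ground-truth task $\bar i(\boldsymbol{x})$, within-task index $\bar j(\boldsymbol{x})$ and label $y(\boldsymbol{x})=(\bar i,\bar j)$; write $\boldsymbol{x}\in\mathcal X_i$ iff $\bar i(\boldsymbol{x})=i$. An OOD detector for task $i$ assigns to $\boldsymbol{x}$ a number $P_i(\boldsymbol{x})\in[0,1]$, with cross-entropy $H_{{\rm OOD},i}(\boldsymbol{x})=-\log P_i(\boldsymbol{x})$ if $\boldsymbol{x}\in\mathcal X_i$ and $-\log(1-P_i(\boldsymbol{x}))$ otherwise. The induced TII probability is $P(\boldsymbol{x}\in\mathcal X_i\mid\mathcal D,\theta)=P_i(\boldsymbol{x})/\sum_jP_j(\boldsymbol{x})$. WTP predictors give, for each $i$, distributions $\big(P(\boldsymbol{x}\in\mathcal X_{i,j}\mid\boldsymbol{x}\in\mathcal X_i,\mathcal D,\theta)\big)_{j\in[n_i]}$; the joint prediction is $P(\boldsymbol{x}\in\mathcal X_{i,j}\mid\mathcal D,\theta)=P(\boldsymbol{x}\in\mathcal X_i\mid\mathcal D,\theta)P(\boldsymbol{x}\in\mathcal X_{i,j}\mid\boldsymbol{x}\in\mathcal X_i,\mathcal D,\theta)$; a TAP predictor gives a separate distribution $\big(P(\boldsymbol{x}\in\mathcal X^c\mid\mathcal D,\theta)\big)_{c\in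 C}$. All are measurable in $\boldsymbol{x}$. With $-\log0=+\infty$: $H_{\rm WTP}(\boldsymbol{x})=-\log P(\boldsymbol{x}\in\mathcal X_{\bar i,\bar j}\mid\boldsymbol{x}\in\mathcal X_{\bar i},\mathcal D,\theta)$, $H_{\rm TAP}(\boldsymbol{x})=-\log P(\boldsymbol{x}\in\mathcal X^{y(\boldsymbol{x})}\mid\mathcal D,\theta)$. The loss error is $\mathcal L=\max\{\mathbb{E}_{\boldsymbol{x}\sim\mu}[-\log P(\boldsymbol{x}\in\mathcal X_{\bar i,\bar j}\mid\mathcal D,\theta)],\ \mathbb{E}_{\boldsymbol{x}\sim\mu}[H_{\rm TAP}(\boldsymbol{x})]\}$. *)

theory Defs
  imports "HOL-Probability.Probability"
begin

text \<open>Tasks are indexed by i < t (i.e. [t] is rendered as {..<t}); within-task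
classes of task i by j < n i. The cross-entropy -log p is valued in ennreal
with -log 0 = infinity.\<close>

definition neglog :: "real \<Rightarrow> ennreal" where
  "neglog p = (if p \<le> 0 then \<infinity> else ennreal (- ln p))"

definition classes :: "nat \<Rightarrow> (nat \<Rightarrow> nat) \<Rightarrow> (nat \<times> nat) set" where
  "classes t n = Sigma {..<t} (\<lambda>i. {..<n i})"

definition TII :: "nat \<Rightarrow> (nat \<Rightarrow> 'x \<Rightarrow> real) \<Rightarrow> 'x \<Rightarrow> nat \<Rightarrow> real" where
  "TII t P x i = P i x / (\<Sum>j<t. P j x)"

definition H_OOD :: "(nat \<Rightarrow> 'x \<Rightarrow> real) \<Rightarrow> ('x \<Rightarrow> nat) \<Rightarrow> nat \<Rightarrow> 'x \<Rightarrow> ennreal" where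
  "H_OOD P ibar i x = (if ibar x = i then neglog (P i x) else neglog (1 - P i x))"

text \<open>W i x j = P(x in X_{i,j} | x in X_i).\<close>
definition H_WTP :: "(nat \<Rightarrow> 'x \<Rightarrow> nat \<Rightarrow> real) \<Rightarrow> ('x \<Rightarrow> nat) \<Rightarrow> ('x \<Rightarrow> nat) \<Rightarrow> 'x \<Rightarrow> ennreal" where
  "H_WTP W ibar jbar x = neglog (W (ibar x) x (jbar x))"

text \<open>Q x c = P(x in X^c), TAP prediction.\<close>
definition H_TAP :: "('x \<Rightarrow> nat \<times> nat \<Rightarrow> real) \<Rightarrow> ('x \<Rightarrow> nat) \<Rightarrow> ('x \<Rightarrow> nat) \<Rightarrow> 'x \<Rightarrow> ennreal" where
  "H_TAP Q ibar jbar x = neglog (Q x (ibar x, jbar x))"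

definition joint_pred :: "nat \<Rightarrow> (nat \<Rightarrow> 'x \<Rightarrow> real) \<Rightarrow> (nat \<Rightarrow> 'x \<Rightarrow> nat \<Rightarrow> real) \<Rightarrow> 'x \<Rightarrow> nat \<Rightarrow> nat \<Rightarrow> real" where
  "joint_pred t P W x i j = TII t P x i * W i x j"

definition loss_error ::
  "'x measure \<Rightarrow> nat \<Rightarrow> (nat \<Rightarrow> 'x \<Rightarrow> real) \<Rightarrow> (nat \<Rightarrow> 'x \<Rightarrow> nat \<Rightarrow> real)
   \<Rightarrow> ('x \<Rightarrow> nat \<times> nat \<Rightarrow> real) \<Rightarrow> ('x \<Rightarrow> nat) \<Rightarrow> ('x \<Rightarrow> nat) \<Rightarrow> ennreal" where
  "loss_error \<mu> t P W Q ibar jbar =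
     max (\<integral>\<^sup>+ x. neglog (joint_pred t P W x (ibar x) (jbar x)) \<partial>\<mu>)
         (\<integral>\<^sup>+ x. H_TAP Q ibar jbar x \<partial>\<mu>)"

end

theory Submission
  imports Defs
begin

lemma neglog_le_D:
  assumes "neglog p \<le> ennreal e" "e \<ge> 0"
  shows "p > 0 \<and> - ln p \<le> e"
  using assms by (auto simp: neglog_def top_unique split: if_splits)

lemma neglog_le_exp:
  assumes "neglog p \<le> ennreal e" "e \<ge> 0"
  shows "p \<ge> exp (- e)"
proof -
  from neglog_le_D[OF assms] have p: "p > 0" "-ln p \<le> e" by auto
  have "exp (-e) \<le> exp (ln p)" using p by (subst exp_le_cancel_iff) linarith
  thus ?thesis using p by simp
qed

lemma key_real:
  fixes P :: "nat \<Rightarrow> real" and e :: "nat \<Rightarrow> real"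
  assumes i: "i < t" and Pr: "\<And>j. j < t \<Longrightarrow> 0 \<le> P j"
    and Pi: "P i \<ge> exp (- e i)"
    and Pj: "\<And>j. j < t \<Longrightarrow> j \<noteq> i \<Longrightarrow> P j \<le> 1 - exp (- e j)"
    and w: "w > 0" "- ln w \<le> d"
  shows "- ln (P i / (\<Sum>j<t. P j) * w) \<le>
    d + exp (e i) * (\<Sum>j<t. if i \<noteq> j then 1 - exp (- e j) else 0)"
proof -
  define R where "R = (\<Sum>j\<in>{..<t}-{i}. P j)"
  define B where "B = (\<Sum>j<t. if i \<noteq> j then 1 - exp (- e j) else 0)"
  have S: "(\<Sum>j<t. P j) = P i + R"
    unfolding R_def using i by (simp add: sum.remove)
  have R0: "R \<ge> 0" unfolding R_def using Pr by (auto intro: sum_nonneg)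
  have "R \<le> (\<Sum>j\<in>{..<t}-{i}. 1 - exp (- e j))"
    unfolding R_def using Pj by (auto intro: sum_mono)
  also have "\<dots> = B" unfolding B_def using i
    by (simp add: sum.remove[of "{..<t}" i] )
  finally have RB: "R \<le> B" .
  have pi0: "P i > 0" using Pi by (smt (verit) exp_gt_zero)
  have "1 / P i \<le> exp (e i)"
  proof -
    have "1 / P i \<le> 1 / exp (- e i)" using pi0 Pi by (simp add: frac_le)
    moreover have "1 / exp (- e i) = exp (e i)" by (simp add: exp_minus divide_inverse)
    ultimately show ?thesis by simp
  qed
  hence RP: "R / P i \<le> exp (e i) * B"
    using RB R0 pi0 by (smt (verit, best) divide_inverse mult.commute mult_mono inverse_eq_divide inverse_nonnegative_iff_nonnegative)
  have pos: "P i / (P i + R) > 0" using pi0 R0 by simp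
  have e1: "- ln (P i / (P i + R) * w) = - ln (P i / (P i + R)) - ln w"
    using ln_mult[of "P i / (P i + R)" w] pos w pi0 R0 by simp
  have e2: "- ln (P i / (P i + R)) = ln ((P i + R) / P i)"
    using pi0 R0 by (simp add: ln_div)
  have e3: "ln ((P i + R) / P i) \<le> (P i + R) / P i - 1" using pi0 R0 by (intro ln_le_minus_one) simp
  have e4: "(P i + R) / P i - 1 = R / P i" using pi0 by (simp add: field_simps)
  show ?thesis unfolding S using e1 e2 e3 e4 RP w unfolding B_def by linarith
qed


theorem theorem8:
  fixes \<mu> :: "'x measure" and t :: nat and n :: "nat \<Rightarrow> nat"
    and ibar jbar :: "'x \<Rightarrow> nat"
    and P :: "nat \<Rightarrow> 'x \<Rightarrow> real"
    and W :: "nat \<Rightarrow> 'x \<Rightarrow> nat \<Rightarrow> real"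
    and Q :: "'x \<Rightarrow> nat \<times> nat \<Rightarrow> real"
    and \<delta> \<eta> :: real and \<epsilon> :: "nat \<Rightarrow> real"
  assumes prob: "prob_space \<mu>"
    and t_pos: "t \<ge> 1"
    and labels: "\<And>x. x \<in> space \<mu> \<Longrightarrow> ibar x < t \<and> jbar x < n (ibar x)"
    and ibar_meas: "ibar \<in> measurable \<mu> (count_space UNIV)"
    and jbar_meas: "jbar \<in> measurable \<mu> (count_space UNIV)"
    and P_range: "\<And>i x. i < t \<Longrightarrow> x \<in> space \<mu> \<Longrightarrow> 0 \<le> P i x \<and> P i x \<le> 1"
    and P_meas: "\<And>i. i < t \<Longrightarrow> P i \<in> borel_measurable \<mu>"
    and W_nonneg: "\<And>i x j. i < t \<Longrightarrow> x \<in> space \<mu> \<Longrightarrow> j < n i \<Longrightarrow> 0 \<le> W i x j"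
    and W_sum: "\<And>i x. i < t \<Longrightarrow> x \<in> space \<mu> \<Longrightarrow> (\<Sum>j<n i. W i x j) = 1"
    and W_meas: "\<And>i j. i < t \<Longrightarrow> j < n i \<Longrightarrow> (\<lambda>x. W i x j) \<in> borel_measurable \<mu>"
    and Q_nonneg: "\<And>x c. x \<in> space \<mu> \<Longrightarrow> c \<in> classes t n \<Longrightarrow> 0 \<le> Q x c"
    and Q_sum: "\<And>x. x \<in> space \<mu> \<Longrightarrow> (\<Sum>c\<in>classes t n. Q x c) = 1"
    and Q_meas: "\<And>c. c \<in> classes t n \<Longrightarrow> (\<lambda>x. Q x c) \<in> borel_measurable \<mu>"
    and \<delta>_nn: "\<delta> \<ge> 0" and \<eta>_nn: "\<eta> \<ge> 0"
    and \<epsilon>_nn: "\<And>i. i < t \<Longrightarrow> \<epsilon> i \<ge> 0"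
    and WTP_bound: "\<And>x. x \<in> space \<mu> \<Longrightarrow> H_WTP W ibar jbar x \<le> ennreal \<delta>"
    and TAP_bound: "\<And>x. x \<in> space \<mu> \<Longrightarrow> H_TAP Q ibar jbar x \<le> ennreal \<eta>"
    and OOD_bound: "\<And>x i. x \<in> space \<mu> \<Longrightarrow> i < t \<Longrightarrow> H_OOD P ibar i x \<le> ennreal (\<epsilon> i)"
  shows "0 \<le> loss_error \<mu> t P W Q ibar jbar \<and>
         loss_error \<mu> t P W Q ibar jbar \<le>
           max (ennreal \<delta> + (\<integral>\<^sup>+ x. ennreal
                  ((\<Sum>i<t. if ibar x = i then exp (\<epsilon> i) else 0) *
                   (\<Sum>i<t. if ibar x \<noteq> i then 1 - exp (- \<epsilon> i) else 0)) \<partial>\<mu>))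
               (ennreal \<eta>)"
proof -
  interpret prob_space \<mu> by (rule prob)
  define f where "f x = (\<Sum>i<t. if ibar x = i then exp (\<epsilon> i) else 0) *
                   (\<Sum>i<t. if ibar x \<noteq> i then 1 - exp (- \<epsilon> i) else 0)" for x
  have fmeas: "(\<lambda>x. ennreal (f x)) \<in> borel_measurable \<mu>"
    unfolding f_def using ibar_meas by measurable
  have pw: "neglog (joint_pred t P W x (ibar x) (jbar x)) \<le> ennreal \<delta> + ennreal (f x)"
    if x: "x \<in> space \<mu>" for x
  proof -
    let ?i = "ibar x"
    have it: "?i < t" "jbar x < n ?i" using labels[OF x] by auto
    have Pi: "P ?i x \<ge> exp (- \<epsilon> ?i)"
      using OOD_bound[OF x it(1)] \<epsilon>_nn[OF it(1)] by (intro neglog_le_exp) (simp add: H_OOD_def)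
    have Pj: "P j x \<le> 1 - exp (- \<epsilon> j)" if "j < t" "j \<noteq> ?i" for j
    proof -
      have "1 - P j x \<ge> exp (- \<epsilon> j)"
        using OOD_bound[OF x that(1)] \<epsilon>_nn[OF that(1)] that(2)
        by (intro neglog_le_exp) (simp add: H_OOD_def)
      thus ?thesis by simp
    qed
    have w: "W ?i x (jbar x) > 0 \<and> - ln (W ?i x (jbar x)) \<le> \<delta>"
      using WTP_bound[OF x] \<delta>_nn by (intro neglog_le_D) (simp add: H_WTP_def)
    have fx: "f x = exp (\<epsilon> ?i) * (\<Sum>j<t. if ?i \<noteq> j then 1 - exp (- \<epsilon> j) else 0)"
      unfolding f_def using it(1) by (simp add: sum.delta)
    have k: "- ln (P ?i x / (\<Sum>j<t. P j x) * W ?i x (jbar x)) \<le> \<delta> + f x"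
      unfolding fx
      by (rule key_real[OF it(1)]) (use P_range[OF _ x] Pi Pj w in auto)
    have pos: "P ?i x / (\<Sum>j<t. P j x) * W ?i x (jbar x) > 0"
    proof -
      have "P ?i x > 0" using Pi by (smt (verit) exp_gt_zero)
      moreover have "(\<Sum>j<t. P j x) > 0"
        using \<open>P ?i x > 0\<close> it(1) P_range[OF _ x]
        by (smt (verit) sum_nonneg_leq_bound finite_lessThan lessThan_iff sum_nonneg)
      ultimately show ?thesis using w by simp
    qed
    have f0: "f x \<ge> 0" unfolding fx
    proof (intro mult_nonneg_nonneg sum_nonneg)
      fix j assume "j \<in> {..<t}"
      hence "\<epsilon> j \<ge> 0" using \<epsilon>_nn by simp
      thus "0 \<le> (if ibar x \<noteq> j then 1 - exp (- \<epsilon> j) else 0)" by simp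
    qed simp
    have eq: "ennreal \<delta> + ennreal (f x) = ennreal (\<delta> + f x)"
      using ennreal_plus[OF \<delta>_nn f0] by simp
    have "neglog (P ?i x / (\<Sum>j<t. P j x) * W ?i x (jbar x)) \<le> ennreal (\<delta> + f x)"
      unfolding neglog_def using pos k by (auto intro: ennreal_leI)
    thus ?thesis unfolding eq joint_pred_def TII_def .
  qed
  have A: "(\<integral>\<^sup>+ x. neglog (joint_pred t P W x (ibar x) (jbar x)) \<partial>\<mu>) \<le>
      ennreal \<delta> + (\<integral>\<^sup>+ x. ennreal (f x) \<partial>\<mu>)"
  proof -
    have "(\<integral>\<^sup>+ x. neglog (joint_pred t P W x (ibar x) (jbar x)) \<partial>\<mu>) \<le>
        (\<integral>\<^sup>+ x. ennreal \<delta> + ennreal (f x) \<partial>\<mu>)"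
      by (rule nn_integral_mono) (rule pw)
    also have "\<dots> = ennreal \<delta> + (\<integral>\<^sup>+ x. ennreal (f x) \<partial>\<mu>)"
      by (subst nn_integral_add) (use fmeas in \<open>auto simp: emeasure_space_1\<close>)
    finally show ?thesis .
  qed
  have B: "(\<integral>\<^sup>+ x. H_TAP Q ibar jbar x \<partial>\<mu>) \<le> ennreal \<eta>"
  proof -
    have "(\<integral>\<^sup>+ x. H_TAP Q ibar jbar x \<partial>\<mu>) \<le> (\<integral>\<^sup>+ x. ennreal \<eta> \<partial>\<mu>)"
      by (rule nn_integral_mono) (rule TAP_bound)
    thus ?thesis by (simp add: emeasure_space_1)
  qed
  show ?thesis
    unfolding loss_error_def using max.mono[OF A B] unfolding f_def by simp
qed

end
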